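(* The function $q$ satisfies $q(\alpha)\to0$ as $\alpha\to0^+$ and as $\alpha\to(\pi/2)^-$, and there is a unique $\alpha_0^*\in(0,\pi/2)$ (numerically $\alpha_0^*\approx1.391$) such that $q$ is strictly increasing on $(0,\alpha_0^*]$ and strictly decreasing on $[\alpha_0^*,\pi/2)$. Consequently, the Steiner drop system has exactly two equilibria when $\alpha_0\neq\alpha_0^*$ and exactly one equilibrium when $\alpha_0=\alpha_0^*$; when $\alpha_0<\alpha_0^*$ the equilibrium $(0,0,\tfrac13\sqrt{\tan\alpha_0},0)$ is the one with the smaller $y$-coordinate, and when $\alpha_0>\alpha_0^*$ it is the one with the larger $y$-coordinate.
   Context: Let $q(\alpha)=\dfrac{2\sin^2\alpha\,\sqrt{\tan\alpha}}{4+\sec\alpha}$ for $\alpha\in(0,\pi/2)$. Fix $\alpha_0\in(0,\pi/2)$. For $x\in\mathbb{R}$, $y>0$ define $a(x,y)=\sqrt{\left(\tfrac{1}{3y}-3x\right)^2+9y^2}$, $b(x,y)=\sqrt{\left(\tfrac{1}{3y}+3x\right)^2+9y^2}$, $f(x,y)=\frac{1}{a}\left(\frac{1}{3y}-3x\right)-\frac{1}{b}\left(\frac{1}{3y}+3x\right)$, $h(x,y)=-3y\left(\frac1a+\frac1b\right)+\frac{q(\alpha_0)}{3y}\left(\frac{2(a+b)}{3y}+ab\right)$. The Steiner drop system is the ODE on $\{(x,w,y,z)\in\mathbb{R}^4: y>0\}$: $\dot x=w,\ \dot w=f(x,y),\ \dot y=z,\ \dot z=h(x,y)$. *)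

theory Defs
  imports "HOL-Analysis.Analysis"
begin

definition q :: "real \<Rightarrow> real" where
  "q \<alpha> = 2 * (sin \<alpha>)^2 * sqrt (tan \<alpha>) / (4 + 1 / cos \<alpha>)"

definition sd_a :: "real \<Rightarrow> real \<Rightarrow> real" where
  "sd_a x y = sqrt ((1/(3*y) - 3*x)^2 + 9*y^2)"

definition sd_b :: "real \<Rightarrow> real \<Rightarrow> real" where
  "sd_b x y = sqrt ((1/(3*y) + 3*x)^2 + 9*y^2)"

definition sd_f :: "real \<Rightarrow> real \<Rightarrow> real" where
  "sd_f x y = (1 / sd_a x y) * (1/(3*y) - 3*x) - (1 / sd_b x y) * (1/(3*y) + 3*x)"

definition sd_h :: "real \<Rightarrow> real \<Rightarrow> real \<Rightarrow> real" where
  "sd_h \<alpha>0 x y = - 3*y * (1 / sd_a x y + 1 / sd_b x y)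
     + q \<alpha>0 / (3*y) * (2 * (sd_a x y + sd_b x y) / (3*y) + sd_a x y * sd_b x y)"

definition steiner_field :: "real \<Rightarrow> real \<times> real \<times> real \<times> real \<Rightarrow> real \<times> real \<times> real \<times> real" where
  "steiner_field \<alpha>0 p = (case p of (x, w, y, z) \<Rightarrow> (w, sd_f x y, z, sd_h \<alpha>0 x y))"

definition steiner_equilibria :: "real \<Rightarrow> (real \<times> real \<times> real \<times> real) set" where
  "steiner_equilibria \<alpha>0 = {p. fst (snd (snd p)) > 0 \<and> steiner_field \<alpha>0 p = (0, 0, 0, 0)}"

end

theory Submission
  imports Defs
begin

definition R :: "real \<Rightarrow> real" where
  "R c = 16*(1-c^2)^5*c^2/(4*c+1)^4"

definition P :: "real \<Rightarrow> real" where
  "P c = 1 - 4*c - 6*c^2 - 16*c^3"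

lemma R_deriv:
  assumes "4*c+1 \<noteq> 0"
  shows "DERIV R c :> 32*(1-c^2)^4*c*P c/(4*c+1)^5"
proof -
  have "DERIV (\<lambda>c. 16*(1-c^2)^5*c^2/(4*c+1)^4) c :> 
     ((16*(5*(1-c^2)^4*(-(2*c)))*c^2 + 16*(1-c^2)^5*(2*c))*(4*c+1)^4 - 16*(1-c^2)^5*c^2*(4*(4*c+1)^3*4))/((4*c+1)^4*(4*c+1)^4)"
    using assms
    by (auto intro!: derivative_eq_intros simp: power2_eq_square)
  moreover have "((16*(5*(1-c^2)^4*(-(2*c)))*c^2 + 16*(1-c^2)^5*(2*c))*(4*c+1)^4 - 16*(1-c^2)^5*c^2*(4*(4*c+1)^3*4))/((4*c+1)^4*(4*c+1)^4)
      = 32*(1-c^2)^4*c*P c/(4*c+1)^5"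
    using assms unfolding P_def by (simp add: field_simps) algebra
  ultimately show ?thesis unfolding R_def by simp
qed

lemma P_strict_dec: "0 \<le> a \<Longrightarrow> a < b \<Longrightarrow> P b < P a"
proof -
  assume h: "0 \<le> a" "a < b"
  have "a^2 \<le> b^2" using h by (intro power_mono) auto
  moreover have "a^3 \<le> b^3" using h by (intro power_mono) auto
  ultimately show ?thesis using h unfolding P_def by linarith
qed

lemma P_root: "\<exists>c. 0 < c \<and> c < 1 \<and> P c = 0"
proof -
  have "continuous_on {0..1} P" unfolding P_def by (intro continuous_intros)
  then obtain c where "0 \<le> c" "c \<le> 1" "P c = 0"
    using IVT2'[of P 1 0 0] unfolding P_def by auto
  moreover have "c \<noteq> 0" "c \<noteq> 1" using \<open>P c = 0\<close> unfolding P_def by auto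
  ultimately show ?thesis by (intro exI[of _ c]) auto
qed

lemma R_cont: "4*c+1 \<noteq> 0 \<Longrightarrow> isCont R c"
  using R_deriv DERIV_isCont by blast

lemma R_inc:
  assumes "0 \<le> a" "a < b" "b \<le> cs" "P cs = 0"
  shows "R a < R b"
proof (rule DERIV_pos_imp_increasing_open[OF assms(2)])
  fix x assume x: "a < x" "x < b"
  have "P x > 0" using P_strict_dec[of x cs] x assms by auto
  moreover have "x < 1"
  proof (rule ccontr)
    assume "\<not> x < 1" then have "P x \<le> P 1" using P_strict_dec[of 1 x] by (cases "x = 1") auto
    then show False using \<open>P x > 0\<close> unfolding P_def by simp
  qed
  moreover have "x^2 < 1" using x assms \<open>x < 1\<close> by (simp add: abs_square_less_1)
  ultimately have "32*(1-x^2)^4*x*P x/(4*x+1)^5 > 0" using x assms by (intro divide_pos_pos mult_pos_pos) auto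
  then show "\<exists>y. DERIV R x :> y \<and> y > 0" using R_deriv[of x] x assms by (intro exI[of _ "32*(1-x^2)^4*x*P x/(4*x+1)^5"]) auto
next
  show "continuous_on {a..b} R" using assms by (intro continuous_at_imp_continuous_on ballI R_cont) auto
qed

lemma R_dec:
  assumes "cs \<le> a" "a < b" "b \<le> 1" "P cs = 0" "0 < cs"
  shows "R b < R a"
proof (rule DERIV_neg_imp_decreasing_open[OF assms(2)])
  fix x assume x: "a < x" "x < b"
  have "P x < 0" using P_strict_dec[of cs x] x assms by auto
  moreover have "x^2 < 1" using x assms by (simp add: abs_square_less_1)
  ultimately have "32*(1-x^2)^4*x*P x/(4*x+1)^5 < 0" using x assms
    by (intro divide_neg_pos mult_pos_neg) auto
  then show "\<exists>y. DERIV R x :> y \<and> y < 0" using R_deriv[of x] x assms by (intro exI[of _ "32*(1-x^2)^4*x*P x/(4*x+1)^5"]) auto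
next
  show "continuous_on {a..b} R" using assms by (intro continuous_at_imp_continuous_on ballI R_cont) auto
qed

definition g :: "real \<Rightarrow> real" where "g b = sqrt (sqrt (R (cos b)))"

lemma q_pow4:
  assumes "0 < b" "b < pi/2"
  shows "q b ^ 4 = R (cos b)"
proof -
  have c: "cos b > 0" using assms by (intro cos_gt_zero) auto
  have s: "sin b > 0" using assms by (intro sin_gt_zero) auto
  have t: "tan b = sin b / cos b" by (simp add: tan_def)
  have sq: "sqrt (tan b) ^ 4 = (sin b / cos b)^2" using c s t
    by (metis (no_types, lifting) less_imp_le numeral_Bit0 power_mult real_sqrt_pow2 zero_le_divide_iff numeral_One mult_2 power_add power2_eq_square)
  have "q b ^ 4 = 16 * (sin b ^ 2)^4 * sqrt (tan b) ^ 4 / (4 + 1 / cos b)^4"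
    unfolding q_def by (simp add: power_divide power_mult_distrib)
  also have "\<dots> = 16 * (sin b ^ 2)^5 * cos b ^2 / (4 * cos b + 1)^4"
    using c unfolding sq by (simp add: field_simps)
  also have "\<dots> = R (cos b)" unfolding R_def sin_squared_eq by simp
  finally show ?thesis .
qed

lemma q_nonneg: "0 < b \<Longrightarrow> b < pi/2 \<Longrightarrow> q b \<ge> 0"
proof -
  assume a: "0 < b" "b < pi/2"
  have c: "cos b > 0" using a by (intro cos_gt_zero) auto
  have s: "sin b > 0" using a by (intro sin_gt_zero) auto
  have "tan b > 0" using c s by (simp add: tan_def)
  then show ?thesis unfolding q_def using c by (intro divide_nonneg_pos mult_nonneg_nonneg) (auto simp: add_pos_pos)
qed

lemma q_eq_g: "0 < b \<Longrightarrow> b < pi/2 \<Longrightarrow> q b = g b"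
proof -
  assume a: "0 < b" "b < pi/2"
  have "g b = sqrt (sqrt (q b ^ 4))" unfolding g_def q_pow4[OF a] ..
  also have "sqrt (q b ^ 4) = q b ^ 2"
    by (metis numeral_Bit0 power_mult real_sqrt_abs abs_power2 mult_2 power_add power2_eq_square real_sqrt_pow2_iff)
  finally show ?thesis using q_nonneg[OF a] by simp
qed

lemma g_cont: "0 \<le> b \<Longrightarrow> b \<le> pi/2 \<Longrightarrow> isCont g b"
proof -
  assume a: "0 \<le> b" "b \<le> pi/2"
  have "cos b \<ge> 0" using a by (intro cos_ge_zero) auto
  then have "isCont R (cos b)" by (intro R_cont) auto
  then show ?thesis unfolding g_def
    using isCont_o2[where f=cos and a=b and g=R, OF _ \<open>isCont R (cos b)\<close>]
    by (intro continuous_intros) auto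
qed

lemma g_0: "g 0 = 0" and g_pi2: "g (pi/2) = 0" unfolding g_def R_def by auto

lemma g_pos: "0 < b \<Longrightarrow> b < pi/2 \<Longrightarrow> g b > 0"
proof -
  assume a: "0 < b" "b < pi/2"
  have c: "cos b > 0" using a by (intro cos_gt_zero) auto
  have "cos b < 1" using a cos_monotone_0_pi[of 0 b] by auto
  then have "cos b ^ 2 < 1" using c by (simp add: abs_square_less_1)
  then have "R (cos b) > 0" unfolding R_def using c by (intro divide_pos_pos mult_pos_pos) auto
  then show ?thesis unfolding g_def by simp
qed

definition cs :: real where "cs = (SOME c. 0 < c \<and> c < 1 \<and> P c = 0)"
definition als :: real where "als = arccos cs"

lemma cs: "0 < cs" "cs < 1" "P cs = 0"
  using someI_ex[OF P_root] unfolding cs_def by auto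

lemma als: "0 < als" "als < pi/2" "cos als = cs"
proof -
  show "cos als = cs" unfolding als_def using cs by simp
  have "arccos cs < arccos 0" using cs by (intro arccos_less_arccos) auto
  then show "als < pi/2" unfolding als_def by simp
  have "arccos 1 < arccos cs" using cs by (intro arccos_less_arccos) auto
  then show "0 < als" unfolding als_def by simp
qed

lemma g_inc: assumes "0 \<le> a" "a < b" "b \<le> als" shows "g a < g b"
proof -
  have "cos b < cos a" using assms als by (intro cos_monotone_0_pi) auto
  moreover have "cs \<le> cos b" using assms als cos_monotone_0_pi_le[of b als] by auto
  moreover have "cos a \<le> 1" by simp
  ultimately have "R (cos a) < R (cos b)" using cs by (intro R_dec) auto
  then show ?thesis unfolding g_def by simp
qed

lemma g_dec: assumes "als \<le> a" "a < b" "b \<le> pi/2" shows "g b < g a"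
proof -
  have "cos b < cos a" using assms als by (intro cos_monotone_0_pi) auto
  moreover have "cos a \<le> cs" using assms als cos_monotone_0_pi_le[of als a] by auto
  moreover have "0 \<le> cos b" using assms als by (intro cos_ge_zero) auto
  ultimately have "R (cos b) < R (cos a)" using cs by (intro R_inc) auto
  then show ?thesis unfolding g_def by simp
qed

lemma g_cont_on: "0 \<le> a \<Longrightarrow> b \<le> pi/2 \<Longrightarrow> continuous_on {a..b} g"
  by (intro continuous_at_imp_continuous_on ballI g_cont) auto

lemma g_lt_max: "0 \<le> b \<Longrightarrow> b \<le> pi/2 \<Longrightarrow> b \<noteq> als \<Longrightarrow> g b < g als"
  using g_inc[of b als] g_dec[of als b] by (cases "b < als") auto

lemma g_level:
  assumes "0 < v" "v < g als"
  shows "\<exists>b1 b2. 0 < b1 \<and> b1 < als \<and> als < b2 \<and> b2 < pi/2 \<and>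
     {b\<in>{0<..<pi/2}. g b = v} = {b1, b2}"
proof -
  obtain b1 where b1: "0 \<le> b1" "b1 \<le> als" "g b1 = v"
    using IVT'[of g 0 v als] g_cont_on[of 0 als] assms als g_0 by auto
  obtain b2 where b2: "als \<le> b2" "b2 \<le> pi/2" "g b2 = v"
    using IVT2'[of g "pi/2" v als] g_cont_on[of als "pi/2"] assms als g_pi2 by auto
  have "b1 \<noteq> 0" "b1 \<noteq> als" using b1 assms g_0 by auto
  have "b2 \<noteq> pi/2"
  proof
    assume h: "b2 = pi/2"
    have "v = g b2" using b2(3) by simp
    also have "\<dots> = g (pi/2)" using h by (simp only:)
    also have "\<dots> = 0" by (rule g_pi2)
    finally have "v = 0" .
    then show False using assms by simp
  qed
  have "b2 \<noteq> als" using b2 assms by auto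
  have "{b\<in>{0<..<pi/2}. g b = v} = {b1, b2}"
  proof (intro equalityI subsetI)
    fix b assume "b \<in> {b\<in>{0<..<pi/2}. g b = v}"
    then have b: "0 < b" "b < pi/2" "g b = v" by auto
    show "b \<in> {b1, b2}"
    proof (cases "b \<le> als")
      case True
      have "b = b1"
      proof (rule ccontr)
        assume "b \<noteq> b1"
        then consider "b < b1" | "b1 < b" by linarith
        then show False
        proof cases
          case 1 then have "g b < g b1" using b True b1 by (intro g_inc) auto
          then show False using b b1 by simp
        next
          case 2 then have "g b1 < g b" using b True b1 by (intro g_inc) auto
          then show False using b b1 by simp
        qed
      qed
      then show ?thesis by simp
    next
      case False
      have "b = b2"
      proof (rule ccontr)
        assume "b \<noteq> b2"
        then consider "b < b2" | "b2 < b" by linarith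
        then show False
        proof cases
          case 1 then have "g b2 < g b" using b False b2 by (intro g_dec) auto
          then show False using b b2 by simp
        next
          case 2 then have "g b < g b2" using b False b2 by (intro g_dec) auto
          then show False using b b2 by simp
        qed
      qed
      then show ?thesis by simp
    qed
  next
    fix b assume "b \<in> {b1, b2}"
    then consider "b = b1" | "b = b2" by blast
    then show "b \<in> {b\<in>{0<..<pi/2}. g b = v}"
    proof cases
      case 1
      have "0 < b1" using b1(1) \<open>b1 \<noteq> 0\<close> by linarith
      moreover have "b1 < pi/2" using b1(2) als(2) by linarith
      ultimately show ?thesis using 1 b1(3) by simp
    next
      case 2
      have "0 < b2" using b2(1) als(1) by linarith
      moreover have "b2 < pi/2" using b2(2) \<open>b2 \<noteq> pi/2\<close> by linarith
      ultimately show ?thesis using 2 b2(3) by simp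
    qed
  qed
  moreover have "0 < b1" using b1(1) \<open>b1 \<noteq> 0\<close> by linarith
  moreover have "b1 < als" using b1(2) \<open>b1 \<noteq> als\<close> by linarith
  moreover have "als < b2" using b2(1) \<open>b2 \<noteq> als\<close> by linarith
  moreover have "b2 < pi/2" using b2(2) \<open>b2 \<noteq> pi/2\<close> by linarith
  ultimately show ?thesis by blast
qed

lemma phi_inj:
  fixes c t1 t2 :: real
  assumes c: "c > 0" and eq: "(1 / sqrt (t1^2 + c)) * t1 = (1 / sqrt (t2^2 + c)) * t2"
  shows "t1 = t2"
proof -
  have p1: "sqrt (t1^2 + c) > 0" and p2: "sqrt (t2^2 + c) > 0" using c by (auto intro!: add_nonneg_pos)
  have e: "t1 * sqrt (t2^2 + c) = t2 * sqrt (t1^2 + c)" using eq p1 p2 by (simp add: field_simps)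
  then have "(t1 * sqrt (t2^2 + c))^2 = (t2 * sqrt (t1^2 + c))^2" by simp
  then have "t1^2 * (t2^2 + c) = t2^2 * (t1^2 + c)" using c
    by (simp add: power_mult_distrib add_nonneg_nonneg)
  then have "c * t1^2 = c * t2^2" by (simp add: algebra_simps)
  then have sq: "t1^2 = t2^2" using c by simp
  have "t1 > 0 \<longleftrightarrow> t1 * sqrt (t2^2 + c) > 0" using p2 by (simp add: zero_less_mult_iff)
  also have "\<dots> \<longleftrightarrow> t2 > 0" unfolding e using p1 by (simp add: zero_less_mult_iff)
  finally have s1: "t1 > 0 \<longleftrightarrow> t2 > 0" .
  have "t1 < 0 \<longleftrightarrow> t1 * sqrt (t2^2 + c) < 0" using p2 by (simp add: mult_less_0_iff)
  also have "\<dots> \<longleftrightarrow> t2 < 0" unfolding e using p1 by (simp add: mult_less_0_iff)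
  finally have s2: "t1 < 0 \<longleftrightarrow> t2 < 0" .
  note s1 s2
  have "t1 = t2 \<or> t1 = -t2" using sq by (simp add: power2_eq_iff)
  then show ?thesis using s1 s2 by auto
qed

lemma f_zero: assumes "y > 0" shows "sd_f x y = 0 \<longleftrightarrow> x = 0"
proof
  assume h: "sd_f x y = 0"
  have "sd_f x y = (1 / sqrt ((1/(3*y) - 3*x)^2 + 9*y^2)) * (1/(3*y) - 3*x) - (1 / sqrt ((1/(3*y) + 3*x)^2 + 9*y^2)) * (1/(3*y) + 3*x)"
    by (simp only: sd_f_def sd_a_def sd_b_def)
  then have "(1 / sqrt ((1/(3*y) - 3*x)^2 + 9*y^2)) * (1/(3*y) - 3*x) = (1 / sqrt ((1/(3*y) + 3*x)^2 + 9*y^2)) * (1/(3*y) + 3*x)"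
    using h by linarith
  moreover have "(0::real) < 9*y^2" using assms by simp
  ultimately have "1/(3*y) - 3*x = 1/(3*y) + 3*x" by (rule phi_inj[rotated])
  then show "x = 0" by simp
qed (simp add: sd_f_def sd_a_def sd_b_def)

lemma a0: assumes "y > 0" shows "sd_a 0 y = sqrt (1 + 81*y^4) / (3*y)" "sd_b 0 y = sqrt (1 + 81*y^4) / (3*y)"
proof -
  have "(1/(3*y))^2 + 9*y^2 = (1 + 81*y^4) / (3*y)^2" using assms by (simp add: field_simps power2_eq_square power4_eq_xxxx)
  moreover have "sqrt ((3*y)^2) = 3*y" using assms by (subst real_sqrt_abs) simp
  ultimately have "sqrt ((1/(3*y))^2 + 9*y^2) = sqrt (1 + 81*y^4) / (3*y)" using assms by (simp only: real_sqrt_divide)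
  then show "sd_a 0 y = sqrt (1 + 81*y^4) / (3*y)" "sd_b 0 y = sqrt (1 + 81*y^4) / (3*y)"
    unfolding sd_a_def sd_b_def by simp_all
qed

lemma q_arctan: assumes "y > 0"
  shows "q (arctan (9*y^2)) = 486*y^5 / ((1 + 81*y^4) * (4 + sqrt (1 + 81*y^4)))"
proof -
  define A where "A = sqrt (1 + 81*y^4)"
  have A: "A > 0" "A^2 = 1 + 81*y^4" unfolding A_def by (auto intro!: add_pos_nonneg)
  have S: "sqrt (1 + (9*y^2)^2) = A" unfolding A_def by (simp add: power_mult_distrib power2_eq_square power4_eq_xxxx)
  have st: "sqrt (9*y^2) = 3*y" using assms by (simp add: real_sqrt_mult)
  have "q (arctan (9*y^2)) = 2 * (9*y^2/A)^2 * (3*y) / (4 + A)"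
    unfolding q_def sin_arctan cos_arctan tan_arctan S st by simp
  also have "\<dots> = 486*y^5 / (A^2 * (4 + A))" using A by (simp add: field_simps power2_eq_square eval_nat_numeral)
  finally show ?thesis using A unfolding A_def by simp
qed

lemma h_zero: assumes "y > 0"
  shows "sd_h a0 0 y = 0 \<longleftrightarrow> q a0 = q (arctan (9*y^2))"
proof -
  define A where "A = sqrt (1 + 81*y^4)"
  have A: "A > 0" "A^2 = 1 + 81*y^4" unfolding A_def by (auto intro!: add_pos_nonneg)
  have "sd_h a0 0 y = -3*y*(3*y/A + 3*y/A) + q a0/(3*y) * (2*(A/(3*y) + A/(3*y))/(3*y) + A/(3*y)*(A/(3*y)))"
    unfolding sd_h_def a0[OF assms] A_def[symmetric] by simp
  also have "\<dots> = (q a0 * (A^2*(4+A)) - 486*y^5) / (27*y^3*A)"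
    using A(1) assms by (simp add: field_simps power2_eq_square eval_nat_numeral)
  finally have "sd_h a0 0 y = 0 \<longleftrightarrow> q a0 * (A^2*(4+A)) = 486*y^5" using A assms by simp
  also have "\<dots> \<longleftrightarrow> q a0 = 486*y^5 / (A^2*(4+A))"
  proof -
    have pos: "A^2*(4+A) \<noteq> 0" using A(1) by (simp add: add_pos_pos)
    show ?thesis using pos by (simp only: eq_divide_eq if_True not_False_eq_True)
  qed
  finally show ?thesis unfolding q_arctan[OF assms] A_def[symmetric] using A by simp
qed

lemma tan_sqrt_mono: "0 < b \<Longrightarrow> b < b' \<Longrightarrow> b' < pi/2 \<Longrightarrow> sqrt (tan b) / 3 < sqrt (tan b') / 3"
  using tan_monotone[of b b'] by simp

lemma SE: "steiner_equilibria a0 = (\<lambda>b. (0::real, 0::real, sqrt (tan b)/3, 0::real)) ` {b\<in>{0<..<pi/2}. q b = q a0}"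
proof (intro equalityI subsetI)
  fix p assume "p \<in> steiner_equilibria a0"
  then obtain x w y z where p: "p = (x, w, y, z)" and y: "y > 0" and w: "w = 0" and z: "z = 0"
    and f: "sd_f x y = 0" and h: "sd_h a0 x y = 0"
    unfolding steiner_equilibria_def steiner_field_def by (cases p) auto
  have x: "x = 0" using f f_zero[OF y] by simp
  have qe: "q a0 = q (arctan (9*y^2))" using h h_zero[OF y] x by simp
  define b where "b = arctan (9*y^2)"
  have b: "0 < b" "b < pi/2" unfolding b_def using y arctan_ubound[of "9*y^2"] by auto
  have "sqrt (tan b) / 3 = y" unfolding b_def tan_arctan using y by (simp add: real_sqrt_mult)
  then have "p = (\<lambda>b. (0::real, 0::real, sqrt (tan b)/3, 0::real)) b" using p x w z by simp
  moreover have "b \<in> {b\<in>{0<..<pi/2}. q b = q a0}" using b qe unfolding b_def by simp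
  ultimately show "p \<in> (\<lambda>b. (0::real, 0::real, sqrt (tan b)/3, 0::real)) ` {b\<in>{0<..<pi/2}. q b = q a0}" by blast
next
  fix p assume "p \<in> (\<lambda>b. (0::real, 0::real, sqrt (tan b)/3, 0::real)) ` {b\<in>{0<..<pi/2}. q b = q a0}"
  then obtain b where b: "0 < b" "b < pi/2" "q b = q a0" and p: "p = (0, 0, sqrt (tan b)/3, 0)" by auto
  define y where "y = sqrt (tan b) / 3"
  have t: "tan b > 0" using b by (intro tan_gt_zero)
  then have y: "y > 0" unfolding y_def by simp
  have "9*y^2 = tan b" unfolding y_def using t by (simp add: power_divide)
  then have "arctan (9*y^2) = b" using b by (simp add: arctan_tan)
  then have h: "sd_h a0 0 y = 0" using h_zero[OF y] b by simp
  have f: "sd_f 0 y = 0" using f_zero[OF y] by simp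
  show "p \<in> steiner_equilibria a0" unfolding steiner_equilibria_def steiner_field_def p y_def[symmetric]
    using y f h by simp
qed

lemma SE_inj: "inj_on (\<lambda>b. (0::real, 0::real, sqrt (tan b)/3, 0::real)) {b\<in>{0<..<pi/2}. q b = q a0}"
proof (rule inj_onI)
  fix b b' assume "b \<in> {b\<in>{0<..<pi/2}. q b = q a0}" "b' \<in> {b\<in>{0<..<pi/2}. q b = q a0}"
    and e: "(0::real, 0::real, sqrt (tan b)/3, 0::real) = (0, 0, sqrt (tan b')/3, 0)"
  then have bb: "0 < b" "b < pi/2" "0 < b'" "b' < pi/2" by auto
  have e': "sqrt (tan b)/3 = sqrt (tan b')/3" using e by simp
  show "b = b'"
  proof (rule ccontr)
    assume "b \<noteq> b'"
    then consider "b < b'" | "b' < b" by linarith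
    then show False
    proof cases
      case 1 then show False using tan_sqrt_mono[of b b'] bb e' by simp
    next
      case 2 then show False using tan_sqrt_mono[of b' b] bb e' by simp
    qed
  qed
qed

lemma card_SE: "card (steiner_equilibria a0) = card {b\<in>{0<..<pi/2}. q b = q a0}"
  unfolding SE by (rule card_image[OF SE_inj])

lemma L_eq: "{b\<in>{0<..<pi/2}. q b = q a0} = {b\<in>{0<..<pi/2}. g b = g a0}" if "0 < a0" "a0 < pi/2"
  using q_eq_g that by auto

lemma g_inj_left: "0 \<le> b \<Longrightarrow> b \<le> als \<Longrightarrow> 0 \<le> b' \<Longrightarrow> b' \<le> als \<Longrightarrow> g b = g b' \<Longrightarrow> b = b'"
  using g_inc[of b b'] g_inc[of b' b] by (metis less_irrefl linorder_neqE_linordered_idom)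

lemma g_inj_right: "als \<le> b \<Longrightarrow> b \<le> pi/2 \<Longrightarrow> als \<le> b' \<Longrightarrow> b' \<le> pi/2 \<Longrightarrow> g b = g b' \<Longrightarrow> b = b'"
  using g_dec[of b b'] g_dec[of b' b] by (metis less_irrefl linorder_neqE_linordered_idom)

lemma lim0: "(q \<longlongrightarrow> 0) (at_right 0)"
proof -
  have "(g \<longlongrightarrow> g 0) (at 0)" using g_cont[of 0] by (simp add: isCont_def)
  then have "(g \<longlongrightarrow> 0) (at_right 0)" using g_0 filterlim_at_split by auto
  moreover have "eventually (\<lambda>x. g x = q x) (at_right 0)"
    unfolding eventually_at_right_field
    by (intro exI[of _ "pi/2"]) (auto intro: q_eq_g[symmetric])
  ultimately show ?thesis by (rule Lim_transform_eventually)
qed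

lemma limpi2: "(q \<longlongrightarrow> 0) (at_left (pi/2))"
proof -
  have "(g \<longlongrightarrow> g (pi/2)) (at (pi/2))" using g_cont[of "pi/2"] by (simp add: isCont_def)
  then have "(g \<longlongrightarrow> 0) (at_left (pi/2))" using g_pi2 filterlim_at_split by auto
  moreover have "eventually (\<lambda>x. g x = q x) (at_left (pi/2))"
    unfolding eventually_at_left_field
    by (intro exI[of _ 0]) (auto intro: q_eq_g[symmetric])
  ultimately show ?thesis by (rule Lim_transform_eventually)
qed

lemma q_mono: "strict_mono_on {0<..als} q"
proof (rule monotone_onI)
  fix r s assume "r \<in> {0<..als}" "s \<in> {0<..als}" "r < s"
  then show "q r < q s" using q_eq_g[of r] q_eq_g[of s] g_inc[of r s] als by auto
qed

lemma q_anti: "strict_antimono_on {als..<pi/2} q"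
proof (rule monotone_onI)
  fix r s assume "r \<in> {als..<pi/2}" "s \<in> {als..<pi/2}" "r < s"
  then show "q s < q r" using q_eq_g[of r] q_eq_g[of s] g_dec[of r s] als by auto
qed

lemma q_lt_max: "0 < b \<Longrightarrow> b < pi/2 \<Longrightarrow> b \<noteq> als \<Longrightarrow> q b < q als"
  using g_lt_max[of b] q_eq_g[of b] q_eq_g[of als] als by auto

lemma uniq:
  assumes "\<beta> \<in> {0<..<pi/2}" "strict_mono_on {0<..\<beta>} q" "strict_antimono_on {\<beta>..<pi/2} q"
  shows "\<beta> = als"
proof (rule ccontr)
  assume ne: "\<beta> \<noteq> als"
  then have lt: "q \<beta> < q als" using q_lt_max assms(1) by auto
  show False
  proof (cases "\<beta> < als")
    case True
    then have "q als < q \<beta>" using assms(3) als assms(1) unfolding monotone_on_def by auto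
    then show False using lt by simp
  next
    case False
    then have "als < \<beta>" using ne by simp
    then have "q als < q \<beta>" using assms(2) als assms(1) unfolding monotone_on_def by auto
    then show False using lt by simp
  qed
qed

lemma card2: assumes "0 < a0" "a0 < pi/2" "a0 \<noteq> als" shows "card (steiner_equilibria a0) = 2"
proof -
  have "0 < g a0" using g_pos assms by auto
  moreover have "g a0 < g als" using g_lt_max assms by auto
  ultimately obtain b1 b2 where b: "0 < b1" "b1 < als" "als < b2" "b2 < pi/2"
    and L: "{b\<in>{0<..<pi/2}. g b = g a0} = {b1, b2}" using g_level by blast
  have "card (steiner_equilibria a0) = card {b1, b2}" unfolding card_SE L_eq[OF assms(1,2)] L ..
  also have "\<dots> = 2" using b by simp
  finally show ?thesis .
qed

lemma card1: "card (steiner_equilibria als) = 1"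
proof -
  have "{b\<in>{0<..<pi/2}. g b = g als} = {als}"
  proof (intro equalityI subsetI)
    fix b assume "b \<in> {b\<in>{0<..<pi/2}. g b = g als}"
    then show "b \<in> {als}" using g_lt_max[of b] by (cases "b = als") auto
  qed (use als in auto)
  then show ?thesis unfolding card_SE L_eq[OF als(1,2)] by simp
qed

lemma p0_mem: "0 < a0 \<Longrightarrow> a0 < pi/2 \<Longrightarrow> (0::real, 0::real, sqrt (tan a0) / 3, 0::real) \<in> steiner_equilibria a0"
  unfolding SE by (intro imageI) auto

lemma other:
  assumes "0 < a0" "a0 < pi/2" "e \<in> steiner_equilibria a0" "e \<noteq> (0::real, 0::real, sqrt (tan a0) / 3, 0::real)"
  shows "(a0 < als \<longrightarrow> sqrt (tan a0) / 3 < fst (snd (snd e))) \<and> (als < a0 \<longrightarrow> fst (snd (snd e)) < sqrt (tan a0) / 3)"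
proof -
  obtain b where b: "0 < b" "b < pi/2" "q b = q a0" and e: "e = (0, 0, sqrt (tan b)/3, 0)"
    using assms(3) unfolding SE by auto
  have gb: "g b = g a0" using b q_eq_g[of b] q_eq_g[of a0] assms by simp
  have ne: "b \<noteq> a0" using assms(4) e by auto
  show ?thesis
  proof (intro conjI impI)
    assume a: "a0 < als"
    have "\<not> b \<le> als" using g_inj_left[of b a0] gb ne a b assms by auto
    then have "a0 < b" using a by simp
    then show "sqrt (tan a0) / 3 < fst (snd (snd e))" unfolding e using tan_sqrt_mono[of a0 b] assms b by simp
  next
    assume a: "als < a0"
    have "\<not> als \<le> b" using g_inj_right[of b a0] gb ne a b assms by auto
    then have "b < a0" using a by simp
    then show "fst (snd (snd e)) < sqrt (tan a0) / 3" unfolding e using tan_sqrt_mono[of b a0] assms b by simp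
  qed
qed

theorem mainTheorem3:
  shows "(q \<longlongrightarrow> 0) (at_right 0) \<and> (q \<longlongrightarrow> 0) (at_left (pi/2)) \<and>
    (\<exists>\<alpha>s. \<alpha>s \<in> {0<..<pi/2} \<and>
       strict_mono_on {0<..\<alpha>s} q \<and> strict_antimono_on {\<alpha>s..<pi/2} q \<and>
       (\<forall>\<beta>\<in>{0<..<pi/2}. strict_mono_on {0<..\<beta>} q \<and> strict_antimono_on {\<beta>..<pi/2} q
            \<longrightarrow> \<beta> = \<alpha>s) \<and>
       (\<forall>\<alpha>0\<in>{0<..<pi/2}.
          (\<alpha>0 \<noteq> \<alpha>s \<longrightarrow> card (steiner_equilibria \<alpha>0) = 2) \<and>
          (\<alpha>0 = \<alpha>s \<longrightarrow> card (steiner_equilibria \<alpha>0) = 1) \<and>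
          (let p0 = (0::real, 0::real, sqrt (tan \<alpha>0) / 3, 0::real) in
             (\<alpha>0 < \<alpha>s \<longrightarrow> p0 \<in> steiner_equilibria \<alpha>0 \<and>
                (\<forall>e\<in>steiner_equilibria \<alpha>0. e \<noteq> p0 \<longrightarrow> fst (snd (snd p0)) < fst (snd (snd e)))) \<and>
             (\<alpha>0 > \<alpha>s \<longrightarrow> p0 \<in> steiner_equilibria \<alpha>0 \<and>
                (\<forall>e\<in>steiner_equilibria \<alpha>0. e \<noteq> p0 \<longrightarrow> fst (snd (snd e)) < fst (snd (snd p0)))))))"
proof (intro conjI lim0 limpi2 exI[of _ als] q_mono q_anti ballI impI)
  show "als \<in> {0<..<pi/2}" using als by simp
next
  fix \<beta> assume "\<beta> \<in> {0<..<pi/2}" "strict_mono_on {0<..\<beta>} q \<and> strict_antimono_on {\<beta>..<pi/2} q"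
  then show "\<beta> = als" using uniq by blast
next
  fix a0 assume "a0 \<in> {0<..<pi/2}"
  then have a: "0 < a0" "a0 < pi/2" by auto
  show "a0 \<noteq> als \<Longrightarrow> card (steiner_equilibria a0) = 2" using card2 a by blast
  show "a0 = als \<Longrightarrow> card (steiner_equilibria a0) = 1" using card1 by simp
  show "let p0 = (0::real, 0::real, sqrt (tan a0) / 3, 0::real) in
             (a0 < als \<longrightarrow> p0 \<in> steiner_equilibria a0 \<and>
                (\<forall>e\<in>steiner_equilibria a0. e \<noteq> p0 \<longrightarrow> fst (snd (snd p0)) < fst (snd (snd e)))) \<and>
             (a0 > als \<longrightarrow> p0 \<in> steiner_equilibria a0 \<and>
                (\<forall>e\<in>steiner_equilibria a0. e \<noteq> p0 \<longrightarrow> fst (snd (snd e)) < fst (snd (snd p0))))"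
    unfolding Let_def using p0_mem[OF a] other[OF a] by auto
qed

end
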